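(* Let $G=(B\cup W,E)$ be a bipartite graph that admits a BW-automorphism. Then, as an instance of Bipartite Influence, $G=0$; in particular $Ls(G)=Rs(G)=0$.
   Context: Bipartite Influence: played on a bipartite graph $G=(B\cup W,E)$ with black vertices $B$ and white vertices $W$, edges between $B$ and $W$. Isolated vertices are credited to the owner of their colour (black to Left, white to Right). On her turn Left picks a black vertex $x$ and removes $x$, its neighbours, and the vertices that thereby become isolated (credited to her); Right does the same with white vertices. Score = Left's removed/credited vertices minus Right's. $Ls(G)$, $Rs(G)$ are the optimal scores when Left, resp. Right, moves first. The disjoint union of positions is their disjunctive sum; $G=0$ means $Ls(G+H)=Ls(H)$ and $Rs(G+H)=Rs(H)$ for every Bipartite Influence position (more generally every dicotic nonzugzwang scoring game) $H$. A BW-automorphism of $G$ is a graph automorphism $\varphi$ of $G$ that is involutive ($\varphi(\varphi(u))=u$ for all $u$), maps black vertices to white vertices and white to black, and satisfies $d(v,\varphi(v))\geq 3$ for every vertex $v$, where $d$ is the shortest-path distance ($d=\infty$ between different connected components). *)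

theory Defs
  imports Main
begin

text \<open>A Bipartite Influence position: a finite vertex set V, a colouring
  c (c v = True means v is black, False means white) and an edge relation E.
  Only edges between vertices of V matter.\<close>

definition bipartite_graph :: "'a set \<Rightarrow> ('a \<Rightarrow> bool) \<Rightarrow> ('a \<Rightarrow> 'a \<Rightarrow> bool) \<Rightarrow> bool" where
  "bipartite_graph V c E \<longleftrightarrow> finite V \<and>
     (\<forall>u\<in>V. \<forall>v\<in>V. E u v \<longleftrightarrow> E v u) \<and>
     (\<forall>u\<in>V. \<forall>v\<in>V. E u v \<longrightarrow> c u \<noteq> c v)"

definition cnbhd :: "('a \<Rightarrow> 'a \<Rightarrow> bool) \<Rightarrow> 'a set \<Rightarrow> 'a \<Rightarrow> 'a set" where
  "cnbhd E U x = insert x {y\<in>U. E x y}"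

definition iso :: "('a \<Rightarrow> 'a \<Rightarrow> bool) \<Rightarrow> 'a set \<Rightarrow> 'a set" where
  "iso E U = {v\<in>U. \<not> (\<exists>w\<in>U. E v w)}"

text \<open>Credit of a set of isolated vertices: black ones to Left (+1),
  white ones to Right (-1).\<close>
definition credit :: "('a \<Rightarrow> bool) \<Rightarrow> 'a set \<Rightarrow> int" where
  "credit c S = int (card {v\<in>S. c v}) - int (card {v\<in>S. \<not> c v})"

text \<open>Optimal score (Left minus Right) of the position V, with Left to
  move if the flag is True, Right otherwise. The first argument is fuel;
  it is always at least the number of vertices (see Ls/Rs).
  Isolated vertices are first credited to the owner of their colour; then
  the player to move chooses a vertex x of her colour, removes its closed
  neighbourhood (credited to her), and play continues (vertices that thereby
  become isolated are credited in the recursive call).\<close>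
fun infl :: "nat \<Rightarrow> bool \<Rightarrow> ('a \<Rightarrow> bool) \<Rightarrow> ('a \<Rightarrow> 'a \<Rightarrow> bool) \<Rightarrow> 'a set \<Rightarrow> int" where
  "infl 0 left c E V = credit c (iso E V)"
| "infl (Suc n) left c E V =
     credit c (iso E V) +
     (let U = V - iso E V; M = {x\<in>U. c x = left} in
      if M = {} then 0
      else if left then
        Max ((\<lambda>x. int (card (cnbhd E U x)) + infl n False c E (U - cnbhd E U x)) ` M)
      else
        Min ((\<lambda>x. - int (card (cnbhd E U x)) + infl n True c E (U - cnbhd E U x)) ` M))"

definition Ls :: "'a set \<Rightarrow> ('a \<Rightarrow> bool) \<Rightarrow> ('a \<Rightarrow> 'a \<Rightarrow> bool) \<Rightarrow> int" where
  "Ls V c E = infl (card V) True c E V"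

definition Rs :: "'a set \<Rightarrow> ('a \<Rightarrow> bool) \<Rightarrow> ('a \<Rightarrow> 'a \<Rightarrow> bool) \<Rightarrow> int" where
  "Rs V c E = infl (card V) False c E V"

definition sum_V :: "'a set \<Rightarrow> 'b set \<Rightarrow> ('a + 'b) set" where
  "sum_V V W = Inl ` V \<union> Inr ` W"

definition sum_col :: "('a \<Rightarrow> bool) \<Rightarrow> ('b \<Rightarrow> bool) \<Rightarrow> ('a + 'b) \<Rightarrow> bool" where
  "sum_col c d = case_sum c d"

fun sum_E :: "('a \<Rightarrow> 'a \<Rightarrow> bool) \<Rightarrow> ('b \<Rightarrow> 'b \<Rightarrow> bool) \<Rightarrow> ('a + 'b) \<Rightarrow> ('a + 'b) \<Rightarrow> bool" where
  "sum_E E F (Inl x) (Inl y) = E x y"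
| "sum_E E F (Inr x) (Inr y) = F x y"
| "sum_E E F _ _ = False"

fun walk_le :: "'a set \<Rightarrow> ('a \<Rightarrow> 'a \<Rightarrow> bool) \<Rightarrow> nat \<Rightarrow> 'a \<Rightarrow> 'a \<Rightarrow> bool" where
  "walk_le V E 0 u v \<longleftrightarrow> u = v"
| "walk_le V E (Suc n) u v \<longleftrightarrow> walk_le V E n u v \<or> (\<exists>w\<in>V. E u w \<and> walk_le V E n w v)"

text \<open>d(u,v) \<ge> 3 (distance infinite between components): no walk of length \<le> 2.\<close>
definition dist_ge3 :: "'a set \<Rightarrow> ('a \<Rightarrow> 'a \<Rightarrow> bool) \<Rightarrow> 'a \<Rightarrow> 'a \<Rightarrow> bool" where
  "dist_ge3 V E u v \<longleftrightarrow> \<not> walk_le V E 2 u v"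

definition BW_automorphism :: "'a set \<Rightarrow> ('a \<Rightarrow> bool) \<Rightarrow> ('a \<Rightarrow> 'a \<Rightarrow> bool) \<Rightarrow> ('a \<Rightarrow> 'a) \<Rightarrow> bool" where
  "BW_automorphism V c E \<phi> \<longleftrightarrow>
     bij_betw \<phi> V V \<and>
     (\<forall>u\<in>V. \<forall>v\<in>V. E u v \<longleftrightarrow> E (\<phi> u) (\<phi> v)) \<and>
     (\<forall>u\<in>V. \<phi> (\<phi> u) = u) \<and>
     (\<forall>u\<in>V. c (\<phi> u) \<noteq> c u) \<and>
     (\<forall>v\<in>V. dist_ge3 V E v (\<phi> v))"

end

theory Submission
  imports Defs
begin


lemma infl_fuel_Suc:
  "finite X \<Longrightarrow> card X \<le> n \<Longrightarrow> infl (Suc n) b c E X = infl n b c E X"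
proof (induction n arbitrary: X b)
  case 0
  then show ?case by (simp add: iso_def)
next
  case (Suc n)
  let ?U = "X - iso E X"
  have U: "\<And>x. x \<in> ?U \<Longrightarrow> card (?U - cnbhd E ?U x) \<le> n"
  proof -
    fix x assume x: "x \<in> ?U"
    have "card (?U - cnbhd E ?U x) < card X"
      using x Suc.prems by (intro psubset_card_mono) (auto simp: cnbhd_def)
    then show "card (?U - cnbhd E ?U x) \<le> n" using Suc.prems by simp
  qed
  have fin: "\<And>x. finite (?U - cnbhd E ?U x)" using Suc.prems by auto
  have e1: "\<And>bb. (\<lambda>x. int (card (cnbhd E ?U x)) + infl (Suc n) bb c E (?U - cnbhd E ?U x)) ` {x\<in>?U. c x = b}
      = (\<lambda>x. int (card (cnbhd E ?U x)) + infl n bb c E (?U - cnbhd E ?U x)) ` {x\<in>?U. c x = b}"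
    using Suc.IH[OF fin U] by (intro image_cong) auto
  have e2: "\<And>bb. (\<lambda>x. - int (card (cnbhd E ?U x)) + infl (Suc n) bb c E (?U - cnbhd E ?U x)) ` {x\<in>?U. c x = b}
      = (\<lambda>x. - int (card (cnbhd E ?U x)) + infl n bb c E (?U - cnbhd E ?U x)) ` {x\<in>?U. c x = b}"
    using Suc.IH[OF fin U] by (intro image_cong) auto
  show ?case
    unfolding infl.simps(2)[of "Suc n" b c E X] infl.simps(2)[of n b c E X] Let_def e1 e2 ..
qed

lemma infl_fuel:
  assumes "finite X" "card X \<le> n" shows "infl n b c E X = infl (card X) b c E X"
  using assms(2)
proof (induction n rule: dec_induct)
  case base then show ?case by simp
next
  case (step n) then show ?case using infl_fuel_Suc[OF assms(1), of n] by simp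
qed



lemma credit_image:
  assumes "inj_on f S" "\<forall>u\<in>S. c' (f u) = c u"
  shows "credit c' (f ` S) = credit c S"
proof -
  have 1: "{v\<in>f ` S. c' v} = f ` {v\<in>S. c v}" using assms(2) by auto
  have 2: "{v\<in>f ` S. \<not> c' v} = f ` {v\<in>S. \<not> c v}" using assms(2) by auto
  show ?thesis unfolding credit_def 1 2
    using assms(1) by (simp add: card_image inj_on_subset)
qed

lemma infl_transfer:
  assumes "inj_on f X" "\<forall>u\<in>X. c' (f u) = c u" "\<forall>u\<in>X. \<forall>v\<in>X. E' (f u) (f v) = E u v"
  shows "infl n b c' E' (f ` X) = infl n b c E X"
  using assms
proof (induction n arbitrary: X b)
  case 0
  have "iso E' (f ` X) = f ` iso E X" using 0 by (auto simp: iso_def)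
  moreover have "iso E X \<subseteq> X" by (auto simp: iso_def)
  moreover have "credit c' (f ` iso E X) = credit c (iso E X)"
    using credit_image[of f "iso E X" c' c] inj_on_subset[OF 0(1) \<open>iso E X \<subseteq> X\<close>] 0(2) \<open>iso E X \<subseteq> X\<close> by blast
  ultimately show ?case by simp
next
  case (Suc n)
  have isoe: "iso E' (f ` X) = f ` iso E X" using Suc.prems by (auto simp: iso_def)
  have isoX: "iso E X \<subseteq> X" by (auto simp: iso_def)
  let ?U = "X - iso E X"
  have Ue: "f ` X - iso E' (f ` X) = f ` ?U" using isoe Suc.prems(1) isoX
    by (simp add: inj_on_image_set_diff)
  have cr: "credit c' (iso E' (f ` X)) = credit c (iso E X)"
    using isoe credit_image[of f "iso E X" c' c] inj_on_subset[OF Suc.prems(1) isoX] Suc.prems(2) isoX by auto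
  have Me: "{y\<in>f ` ?U. c' y = b} = f ` {x\<in>?U. c x = b}" using Suc.prems by auto
  have Ne: "\<And>x. x \<in> ?U \<Longrightarrow> cnbhd E' (f ` ?U) (f x) = f ` cnbhd E ?U x"
    using Suc.prems by (auto simp: cnbhd_def)
  have NX: "\<And>x. cnbhd E ?U x \<subseteq> X \<or> x \<notin> ?U" by (auto simp: cnbhd_def)
  have Re: "\<And>x. x \<in> ?U \<Longrightarrow> f ` ?U - cnbhd E' (f ` ?U) (f x) = f ` (?U - cnbhd E ?U x)"
    using Ne Suc.prems(1) by (auto simp: cnbhd_def inj_on_image_set_diff[of f X] inj_on_def)
  have ce: "\<And>x. x \<in> ?U \<Longrightarrow> card (cnbhd E' (f ` ?U) (f x)) = card (cnbhd E ?U x)"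
    using Ne Suc.prems(1) NX by (metis card_image inj_on_subset)
  have IH: "\<And>x bb. x \<in> ?U \<Longrightarrow> infl n bb c' E' (f ` (?U - cnbhd E ?U x)) = infl n bb c E (?U - cnbhd E ?U x)"
    by (rule Suc.IH) (use Suc.prems in \<open>auto intro: inj_on_subset\<close>)
  have i1: "(\<lambda>y. int (card (cnbhd E' (f ` ?U) y)) + infl n False c' E' (f ` ?U - cnbhd E' (f ` ?U) y)) ` f ` {x\<in>?U. c x = b}
     = (\<lambda>x. int (card (cnbhd E ?U x)) + infl n False c E (?U - cnbhd E ?U x)) ` {x\<in>?U. c x = b}"
    unfolding image_image by (rule image_cong) (auto simp: Re ce IH)
  have i2: "(\<lambda>y. - int (card (cnbhd E' (f ` ?U) y)) + infl n True c' E' (f ` ?U - cnbhd E' (f ` ?U) y)) ` f ` {x\<in>?U. c x = b}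
     = (\<lambda>x. - int (card (cnbhd E ?U x)) + infl n True c E (?U - cnbhd E ?U x)) ` {x\<in>?U. c x = b}"
    unfolding image_image by (rule image_cong) (auto simp: Re ce IH)
  show ?case
    unfolding infl.simps(2)[of n b c' E'] infl.simps(2)[of n b c E] Let_def Ue cr Me i1 i2
    by simp
qed



lemma credit_empty[simp]: "credit c {} = 0" by (simp add: credit_def)

lemma credit_union:
  assumes "finite A" "finite B" "A \<inter> B = {}"
  shows "credit c (A \<union> B) = credit c A + credit c B"
proof -
  have 1: "{v\<in>A \<union> B. c v} = {v\<in>A. c v} \<union> {v\<in>B. c v}" by auto
  have 2: "{v\<in>A \<union> B. \<not> c v} = {v\<in>A. \<not> c v} \<union> {v\<in>B. \<not> c v}" by auto
  show ?thesis unfolding credit_def 1 2 using assms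
    by (simp add: card_Un_disjoint disjoint_iff)
qed

lemma iso_sub: "iso E X \<subseteq> X" by (auto simp: iso_def)


locale ig =
  fixes c :: "'a \<Rightarrow> bool" and E :: "'a \<Rightarrow> 'a \<Rightarrow> bool"
  assumes symE: "E u v = E v u" and bipE: "E u v \<Longrightarrow> c u \<noteq> c v"
begin

lemma irr: "\<not> E u u" using bipE by blast

lemma iso_free: "iso E (X - iso E X) = {}" using symE by (auto simp: iso_def)

definition sc :: "bool \<Rightarrow> 'a set \<Rightarrow> int" where
  "sc b X = infl (card X) b c E X"

definition fL :: "'a set \<Rightarrow> 'a \<Rightarrow> int" where
  "fL U x = int (card (cnbhd E U x)) + sc False (U - cnbhd E U x)"
definition fR :: "'a set \<Rightarrow> 'a \<Rightarrow> int" where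
  "fR U x = - int (card (cnbhd E U x)) + sc True (U - cnbhd E U x)"
definition mL :: "'a set \<Rightarrow> int" where
  "mL U = (if {x\<in>U. c x} = {} then 0 else Max (fL U ` {x\<in>U. c x}))"
definition mR :: "'a set \<Rightarrow> int" where
  "mR U = (if {x\<in>U. \<not> c x} = {} then 0 else Min (fR U ` {x\<in>U. \<not> c x}))"

lemma sc_empty[simp]: "sc b {} = 0" by (simp add: sc_def iso_def)

lemma sc_unfold:
  assumes "finite X"
  shows "sc True X = credit c (iso E X) + mL (X - iso E X)"
    and "sc False X = credit c (iso E X) + mR (X - iso E X)"
proof -
  let ?U = "X - iso E X"
  have "sc True X = credit c (iso E X) + mL ?U \<and> sc False X = credit c (iso E X) + mR ?U"
  proof (cases "card X")
    case 0
    then have "X = {}" using assms by simp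
    then show ?thesis by (simp add: iso_def mL_def mR_def)
  next
    case (Suc m)
    have sm: "\<And>x. x \<in> ?U \<Longrightarrow> card (?U - cnbhd E ?U x) \<le> m"
    proof -
      fix x assume x: "x \<in> ?U"
      have "card (?U - cnbhd E ?U x) < card X"
        using x assms by (intro psubset_card_mono) (auto simp: cnbhd_def)
      then show "card (?U - cnbhd E ?U x) \<le> m" using Suc by simp
    qed
    have fu: "\<And>x bb. x \<in> ?U \<Longrightarrow> infl m bb c E (?U - cnbhd E ?U x) = sc bb (?U - cnbhd E ?U x)"
      unfolding sc_def using sm assms by (intro infl_fuel) auto
    have i1: "(\<lambda>x. int (card (cnbhd E ?U x)) + infl m False c E (?U - cnbhd E ?U x)) ` {x\<in>?U. c x}
      = fL ?U ` {x\<in>?U. c x}"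
      by (rule image_cong) (auto simp: fL_def fu)
    have i2: "(\<lambda>x. - int (card (cnbhd E ?U x)) + infl m True c E (?U - cnbhd E ?U x)) ` {x\<in>?U. \<not> c x}
      = fR ?U ` {x\<in>?U. \<not> c x}"
      by (rule image_cong) (auto simp: fR_def fu)
    have s1: "{x\<in>?U. c x = True} = {x\<in>?U. c x}" by simp
    have s2: "{x\<in>?U. c x = False} = {x\<in>?U. \<not> c x}" by simp
    have a: "sc True X = credit c (iso E X) + mL ?U"
      unfolding sc_def Suc infl.simps(2)[of m True c E X] Let_def s1 i1 mL_def if_True by (rule refl)
    have b: "sc False X = credit c (iso E X) + mR ?U"
      unfolding sc_def Suc infl.simps(2)[of m False c E X] Let_def s2 i2 mR_def if_False by (rule refl)
    show ?thesis using a b by simp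
  qed
  then show "sc True X = credit c (iso E X) + mL ?U" "sc False X = credit c (iso E X) + mR ?U"
    by auto
qed

lemma mL_ge: "finite U \<Longrightarrow> x \<in> U \<Longrightarrow> c x \<Longrightarrow> fL U x \<le> mL U"
  unfolding mL_def by (auto intro!: Max_ge)

lemma mL_ex: "finite U \<Longrightarrow> x \<in> U \<Longrightarrow> c x \<Longrightarrow> \<exists>y\<in>U. c y \<and> mL U = fL U y"
proof -
  assume a: "finite U" "x \<in> U" "c x"
  then have ne: "fL U ` {x\<in>U. c x} \<noteq> {}" by auto
  have "Max (fL U ` {x\<in>U. c x}) \<in> fL U ` {x\<in>U. c x}" using a ne by (intro Max_in) auto
  then show ?thesis using a unfolding mL_def by auto
qed

lemma mL_none: "\<not> (\<exists>x\<in>U. c x) \<Longrightarrow> mL U = 0" unfolding mL_def by auto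

lemma mR_le: "finite U \<Longrightarrow> x \<in> U \<Longrightarrow> \<not> c x \<Longrightarrow> mR U \<le> fR U x"
  unfolding mR_def by (auto intro!: Min_le)

lemma mR_ex: "finite U \<Longrightarrow> x \<in> U \<Longrightarrow> \<not> c x \<Longrightarrow> \<exists>y\<in>U. \<not> c y \<and> mR U = fR U y"
proof -
  assume a: "finite U" "x \<in> U" "\<not> c x"
  then have ne: "fR U ` {x\<in>U. \<not> c x} \<noteq> {}" by auto
  have "Min (fR U ` {x\<in>U. \<not> c x}) \<in> fR U ` {x\<in>U. \<not> c x}" using a ne by (intro Min_in) auto
  then show ?thesis using a unfolding mR_def by auto
qed

lemma mR_none: "\<not> (\<exists>x\<in>U. \<not> c x) \<Longrightarrow> mR U = 0" unfolding mR_def by auto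

lemma sc_iso:
  assumes "finite X" shows "sc b X = credit c (iso E X) + sc b (X - iso E X)"
proof -
  have f: "finite (X - iso E X)" using assms by auto
  show ?thesis using sc_unfold[OF assms] sc_unfold[OF f] iso_free[of X]
    by (cases b) auto
qed

lemma sc_isofree:
  assumes "finite U" "iso E U = {}"
  shows "sc True U = mL U" "sc False U = mR U"
  using sc_unfold[OF assms(1)] assms(2) by auto

lemma iso_add:
  assumes "finite Y" "finite J" "Y \<inter> J = {}" "\<forall>j\<in>J. \<forall>v\<in>Y \<union> J. \<not> E j v"
  shows "sc b (Y \<union> J) = credit c J + sc b Y"
proof -
  have i: "iso E (Y \<union> J) = iso E Y \<union> J" using assms(4) symE by (auto simp: iso_def)
  have u: "(Y \<union> J) - iso E (Y \<union> J) = Y - iso E Y" using i assms(3) by auto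
  have cr: "credit c (iso E (Y \<union> J)) = credit c (iso E Y) + credit c J"
    unfolding i using assms iso_sub[of E Y] by (intro credit_union) (auto intro: finite_subset)
  have f: "finite (Y \<union> J)" using assms by auto
  show ?thesis using sc_unfold[OF f] sc_unfold[OF assms(1)] u cr by (cases b) auto
qed

lemma isofree_nb:
  assumes "iso E U = {}" "x \<in> U" shows "\<exists>y\<in>U. E x y \<and> c y \<noteq> c x"
  using assms bipE unfolding iso_def by blast

end


context ig begin

definition Wp :: "'a set \<Rightarrow> bool" where
  "Wp X \<longleftrightarrow> (\<forall>w\<in>X. \<not> c w \<longrightarrow> sc True X \<le> sc True (X - {w}) + 1 \<and> sc False X \<le> sc False (X - {w}) + 1)"
definition NZp :: "'a set \<Rightarrow> bool" where
  "NZp X \<longleftrightarrow> sc False X \<le> sc True X"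

lemma credit_black: "\<forall>v\<in>S. c v \<Longrightarrow> credit c S = int (card S)"
  unfolding credit_def
  by (metis (mono_tags, lifting) Collect_empty_eq card.empty diff_0_right mem_Collect_eq of_nat_0 subsetI subset_antisym)

lemma credit_single: "credit c {x} = (if c x then 1 else -1)"
proof (cases "c x")
  case True
  then have "{v\<in>{x}. c v} = {x}" "{v\<in>{x}. \<not> c v} = {}" by auto
  then show ?thesis using True unfolding credit_def by simp
next
  case False
  then have "{v\<in>{x}. c v} = {}" "{v\<in>{x}. \<not> c v} = {x}" by auto
  then show ?thesis using False unfolding credit_def by simp
qed

lemma isofree_empty_noblack:
  assumes "iso E U = {}" "\<not> (\<exists>x\<in>U. c x)" shows "U = {}"
proof (rule ccontr)
  assume "U \<noteq> {}" then obtain x where x: "x \<in> U" by auto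
  from isofree_nb[OF assms(1) x] obtain y where "y \<in> U" "c y \<noteq> c x" by auto
  then show False using assms(2) x by auto
qed

lemma isofree_empty_nowhite:
  assumes "iso E U = {}" "\<not> (\<exists>x\<in>U. \<not> c x)" shows "U = {}"
proof (rule ccontr)
  assume "U \<noteq> {}" then obtain x where x: "x \<in> U" by auto
  from isofree_nb[OF assms(1) x] obtain y where "y \<in> U" "c y \<noteq> c x" by auto
  then show False using assms(2) x by auto
qed

lemma W_isofree:
  assumes fin: "finite U" and isf: "iso E U = {}" and wU: "w \<in> U" and ww: "\<not> c w"
    and IH: "\<And>Y. finite Y \<Longrightarrow> card Y < card U \<Longrightarrow> Wp Y \<and> NZp Y"
  shows "sc True U \<le> sc True (U - {w}) + 1 \<and> sc False U \<le> sc False (U - {w}) + 1"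
proof -
  define U0 where "U0 = U - {w}"
  define J where "J = iso E U0"
  define U' where "U' = U0 - J"
  have finU0: "finite U0" using fin U0_def by auto
  have JU0: "J \<subseteq> U0" unfolding J_def by (rule iso_sub)
  have finJ: "finite J" using JU0 finU0 finite_subset by blast
  have finU': "finite U'" using finU0 U'_def by auto
  have Jiso: "\<And>j v. j \<in> J \<Longrightarrow> v \<in> U0 \<Longrightarrow> \<not> E j v" unfolding J_def iso_def by auto
  have Jw: "\<And>j. j \<in> J \<Longrightarrow> E j w \<and> c j"
  proof -
    fix j assume j: "j \<in> J"
    then have "j \<in> U" using JU0 U0_def by auto
    then have "j \<notin> iso E U" using isf by auto
    then obtain y where y: "y \<in> U" "E j y" using \<open>j \<in> U\<close> unfolding iso_def by auto
    have "y = w" using Jiso[OF j, of y] y U0_def by auto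
    then show "E j w \<and> c j" using y bipE ww by (cases "c j") auto
  qed
  have crJ: "credit c J = int (card J)" using Jw by (intro credit_black) auto
  have isfU': "iso E U' = {}" unfolding U'_def J_def by (rule iso_free)
  have scU0: "\<And>b. sc b U0 = int (card J) + sc b U'"
    using sc_iso[OF finU0] crJ unfolding U'_def J_def by auto
  have Udec: "U = U' \<union> J \<union> {w}" "w \<notin> U'" "w \<notin> J" "U' \<inter> J = {}"
    using wU JU0 unfolding U'_def U0_def by auto
  have cardlt: "\<And>Y x. Y \<subseteq> U \<Longrightarrow> x \<in> U \<Longrightarrow> x \<notin> Y \<Longrightarrow> card Y < card U"
  proof -
    fix Y x assume "Y \<subseteq> U" "x \<in> U" "x \<notin> Y"
    then have "Y \<subset> U" by blast
    then show "card Y < card U" by (rule psubset_card_mono[OF fin])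
  qed
  have JU': "\<And>j v. j \<in> J \<Longrightarrow> v \<in> U' \<union> J \<Longrightarrow> \<not> E j v"
    using Jiso Udec unfolding U'_def U0_def by auto
  have partL: "sc True U \<le> sc True U0 + 1"
  proof -
    obtain y where y: "y \<in> U" "E w y" "c y \<noteq> c w" using isofree_nb[OF isf wU] by auto
    then have cy: "c y" using ww by auto
    obtain x where x: "x \<in> U" "c x" "mL U = fL U x" using mL_ex[OF fin y(1) cy] by auto
    have scU: "sc True U = fL U x" using sc_isofree[OF fin isf] x by simp
    show ?thesis
    proof (cases "x \<in> J")
      case True
      have N: "cnbhd E U x = {x, w}" using Jw[OF True] Jiso[OF True] wU unfolding cnbhd_def U0_def by auto
      have xw: "x \<noteq> w" using x ww by auto
      have R: "U - {x, w} = U' \<union> (J - {x})" using Udec True by auto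
      have s1: "sc False (U' \<union> (J - {x})) = credit c (J - {x}) + sc False U'"
        by (rule iso_add) (use finU' finJ Udec JU' in auto)
      have s2: "credit c (J - {x}) = int (card J) - 1"
      proof -
        have "card J > 0" using True finJ card_gt_0_iff by blast
        then show ?thesis using Jw True finJ by (subst credit_black) auto
      qed
      have nz: "sc False U' \<le> sc True U'"
        using IH[OF finU'] cardlt[of U' w] Udec unfolding NZp_def by auto
      have "fL U x = 2 + (int (card J) - 1) + sc False U'"
        unfolding fL_def N R s1 s2 using xw by simp
      then show ?thesis using scU scU0[of True] nz by simp
    next
      case False
      have xU': "x \<in> U'" using False x Udec ww by auto
      define A where "A = cnbhd E U x"
      define A' where "A' = cnbhd E U' x"
      have AA': "A' = A - {w}" "A \<subseteq> U' \<union> {w}" "x \<in> A'"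
        using Udec xU' JU' symE unfolding A_def A'_def cnbhd_def by auto
      have finA: "finite A" using fin unfolding A_def cnbhd_def by auto
      define Y where "Y = U - A"
      have finY: "finite Y" using fin Y_def by auto
      have Yw: "Y - {w} = (U' - A') \<union> J" using AA' Udec unfolding Y_def by auto
      have s1: "sc False (Y - {w}) = int (card J) + sc False (U' - A')"
        unfolding Yw crJ[symmetric]
        by (rule iso_add) (use finU' finJ Udec JU' in auto)
      have Ylt: "card Y < card U" using cardlt[of Y x] AA' x unfolding Y_def by auto
      have sY: "sc False Y \<le> sc False (Y - {w}) + (if w \<in> A then 0 else 1)"
      proof (cases "w \<in> A")
        case True then have "Y - {w} = Y" unfolding Y_def by auto
        then show ?thesis using True by simp
      next
        case False
        then have "w \<in> Y" using wU Y_def by auto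
        then show ?thesis using IH[OF finY Ylt] ww False unfolding Wp_def by auto
      qed
      have cA: "int (card A) = int (card A') + (if w \<in> A then 1 else 0)"
      proof -
        have "card A > 0" using AA' finA card_gt_0_iff by blast
        then show ?thesis using AA' finA by (auto simp: card_Diff_singleton)
      qed
      have fl: "fL U' x \<le> mL U'" using mL_ge[OF finU' xU' x(2)] .
      have "fL U x = int (card A) + sc False Y" unfolding fL_def A_def Y_def ..
      also have "\<dots> \<le> int (card A') + 1 + int (card J) + sc False (U' - A')"
        using sY s1 cA by (cases "w \<in> A") auto
      also have "\<dots> = fL U' x + 1 + int (card J)" unfolding fL_def A'_def by simp
      finally show ?thesis using fl scU scU0[of True] sc_isofree[OF finU' isfU'] by simp
    qed
  qed
  have partR: "sc False U \<le> sc False U0 + 1"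
  proof (cases "\<exists>y\<in>U'. \<not> c y")
    case True
    then obtain y0 where "y0 \<in> U'" "\<not> c y0" by auto
    then obtain y where y: "y \<in> U'" "\<not> c y" "mR U' = fR U' y" using mR_ex[OF finU'] by blast
    define A where "A = cnbhd E U y"
    have AU: "A = cnbhd E U' y" "A \<subseteq> U'" "y \<in> A"
      using Udec y JU' symE bipE ww unfolding A_def cnbhd_def by auto
    define Y where "Y = U - A"
    have finY: "finite Y" using fin Y_def by auto
    have Yw: "Y - {w} = (U' - A) \<union> J" using AU Udec unfolding Y_def by auto
    have wY: "w \<in> Y" using AU Udec wU unfolding Y_def by auto
    have Ylt: "card Y < card U" using cardlt[of Y y] AU Udec unfolding Y_def by auto
    have s1: "sc True (Y - {w}) = int (card J) + sc True (U' - A)"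
      unfolding Yw crJ[symmetric]
      by (rule iso_add) (use finU' finJ Udec JU' in auto)
    have sY: "sc True Y \<le> sc True (Y - {w}) + 1"
      using IH[OF finY Ylt] ww wY unfolding Wp_def by auto
    have yU: "y \<in> U" using y Udec by auto
    have "mR U \<le> fR U y" by (rule mR_le[OF fin yU y(2)])
    also have "\<dots> = - int (card A) + sc True Y" unfolding fR_def A_def Y_def ..
    also have "\<dots> \<le> fR U' y + 1 + int (card J)" using sY s1 AU unfolding fR_def by simp
    finally show ?thesis using y scU0[of False] sc_isofree[OF fin isf] sc_isofree[OF finU' isfU'] by simp
  next
    case False
    then have U'e: "U' = {}" using isofree_empty_nowhite[OF isfU'] by auto
    have "U - cnbhd E U w = {}" using Udec U'e Jw symE unfolding cnbhd_def by auto
    then have "fR U w \<le> 0" unfolding fR_def by (simp only: sc_empty)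
    moreover have "mR U \<le> fR U w" by (rule mR_le[OF fin wU ww])
    ultimately show ?thesis using scU0[of False] U'e sc_isofree[OF fin isf] by simp
  qed
  show ?thesis using partL partR unfolding U0_def by simp
qed

end


context ig begin

lemma W_general:
  assumes fin: "finite X"
    and IH: "\<And>Y. finite Y \<Longrightarrow> card Y < card X \<Longrightarrow> Wp Y \<and> NZp Y"
  shows "Wp X"
  unfolding Wp_def
proof (intro ballI impI)
  fix w assume wX: "w \<in> X" and ww: "\<not> c w"
  define I where "I = iso E X"
  define U where "U = X - I"
  have finI: "finite I" using fin iso_sub[of E X] I_def finite_subset by blast
  have finU: "finite U" using fin U_def by auto
  have isf: "iso E U = {}" unfolding U_def I_def by (rule iso_free)
  have Iiso: "\<And>i v. i \<in> I \<Longrightarrow> v \<in> X \<Longrightarrow> \<not> E i v" unfolding I_def iso_def by auto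
  have sX: "\<And>b. sc b X = credit c I + sc b U" using sc_iso[OF fin] I_def U_def by auto
  show "sc True X \<le> sc True (X - {w}) + 1 \<and> sc False X \<le> sc False (X - {w}) + 1"
  proof (cases "w \<in> I")
    case True
    have e: "X - {w} = U \<union> (I - {w})" using True iso_sub[of E X] unfolding U_def I_def by auto
    have s: "\<And>b. sc b (X - {w}) = credit c (I - {w}) + sc b U"
 unfolding e by (rule iso_add) (use finU finI Iiso U_def iso_sub[of E X] I_def in auto)
    have "I = (I - {w}) \<union> {w}" using True by auto
    then have "credit c I = credit c (I - {w}) + credit c {w}"
      using finI by (metis Diff_disjoint credit_union finite.emptyI finite.insertI finite_Diff inf_commute)
    then have "credit c I = credit c (I - {w}) - 1" using ww credit_single[of w] by simp
    then show ?thesis using sX s by simp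
  next
    case False
    have wU: "w \<in> U" using False wX U_def by auto
    have e: "X - {w} = (U - {w}) \<union> I" using False iso_sub[of E X] unfolding U_def I_def by auto
    have s: "\<And>b. sc b (X - {w}) = credit c I + sc b (U - {w})"
      unfolding e by (rule iso_add) (use finU finI Iiso U_def iso_sub[of E X] I_def in auto)
    have cU: "card U \<le> card X" using fin U_def by (simp add: card_mono)
    have "sc True U \<le> sc True (U - {w}) + 1 \<and> sc False U \<le> sc False (U - {w}) + 1"
      by (rule W_isofree[OF finU isf wU ww]) (use IH cU in auto)
    then show ?thesis using sX s by simp
  qed
qed

lemma W_iter:
  assumes "finite D" "D \<subseteq> U" "\<forall>d\<in>D. \<not> c d" "\<And>Y. Y \<subseteq> U \<Longrightarrow> Wp Y"
  shows "sc False U \<le> sc False (U - D) + int (card D)"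
  using assms(1-3)
proof (induction D rule: finite_induct)
  case empty then show ?case by simp
next
  case (insert d D0)
  have "sc False U \<le> sc False (U - D0) + int (card D0)" using insert by auto
  moreover have "Wp (U - D0)" using assms(4) by auto
  then have "sc False (U - D0) \<le> sc False (U - D0 - {d}) + 1"
    using insert unfolding Wp_def by auto
  moreover have "U - D0 - {d} = U - insert d D0" by auto
  ultimately show ?case using insert by simp
qed

lemma NZ_from_W:
  assumes fin: "finite X" and W: "\<And>Y. Y \<subseteq> X \<Longrightarrow> Wp Y"
  shows "sc False X \<le> sc True X"
proof -
  define U where "U = X - iso E X"
  have finU: "finite U" using fin U_def by auto
  have isf: "iso E U = {}" unfolding U_def by (rule iso_free)
  have sX: "\<And>b. sc b X = credit c (iso E X) + sc b U" using sc_iso[OF fin] U_def by auto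
  have "sc False U \<le> sc True U"
  proof (cases "\<exists>x\<in>U. c x")
    case False
    then have "U = {}" using isofree_empty_noblack[OF isf] by auto
    then show ?thesis by simp
  next
    case True
    then obtain x where x: "x \<in> U" "c x" by auto
    define A where "A = cnbhd E U x"
    define Dd where "Dd = A - {x}"
    have finA: "finite A" using finU unfolding A_def cnbhd_def by auto
    have xA: "x \<in> A" unfolding A_def cnbhd_def by auto
    have DU: "Dd \<subseteq> U" "\<forall>d\<in>Dd. \<not> c d" "finite Dd"
      using bipE x finA unfolding Dd_def A_def cnbhd_def by auto
    have it: "sc False U \<le> sc False (U - Dd) + int (card Dd)"
      by (rule W_iter[OF DU(3) DU(1) DU(2)]) (use W U_def in auto)
    have e: "U - Dd = (U - A) \<union> {x}" using x xA unfolding Dd_def by auto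
    have s: "sc False (U - Dd) = credit c {x} + sc False (U - A)"
      unfolding e by (rule iso_add) (use finU xA irr in \<open>auto simp: A_def cnbhd_def\<close>)
    have cA: "int (card A) = int (card Dd) + 1"
    proof -
      have "card A > 0" using finA xA card_gt_0_iff by blast
      then show ?thesis using finA xA unfolding Dd_def by (simp add: card_Diff_singleton)
    qed
    have "sc False U \<le> fL U x"
      using it s cA x credit_single[of x] unfolding fL_def A_def[symmetric] by simp
    also have "\<dots> \<le> mL U" by (rule mL_ge[OF finU x])
    finally show ?thesis using sc_isofree[OF finU isf] by simp
  qed
  then show ?thesis using sX by simp
qed

lemma WNZ: "finite X \<Longrightarrow> Wp X \<and> NZp X"
proof (induction "card X" arbitrary: X rule: less_induct)
  case less
  have Wall: "\<And>Y. Y \<subseteq> X \<Longrightarrow> Wp Y"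
  proof -
    fix Y assume Y: "Y \<subseteq> X"
    have finY: "finite Y" using Y less.prems finite_subset by blast
    have "card Y \<le> card X" using Y less.prems card_mono by blast
    then show "Wp Y" using W_general[OF finY] less.hyps finite_subset by force
  qed
  show ?case using Wall NZ_from_W[OF less.prems Wall] unfolding NZp_def by auto
qed

lemma NZ: "finite X \<Longrightarrow> sc False X \<le> sc True X"
  using WNZ unfolding NZp_def by auto

end


locale mir = ig +
  fixes D :: "'a set" and \<phi> :: "'a \<Rightarrow> 'a"
  assumes phiD: "u \<in> D \<Longrightarrow> \<phi> u \<in> D"
    and invol: "u \<in> D \<Longrightarrow> \<phi> (\<phi> u) = u"
    and colsw: "u \<in> D \<Longrightarrow> c (\<phi> u) \<noteq> c u"
    and Ephi: "u \<in> D \<Longrightarrow> v \<in> D \<Longrightarrow> E (\<phi> u) (\<phi> v) = E u v"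
    and closedD: "u \<in> D \<Longrightarrow> E u v \<Longrightarrow> v \<in> D"
    and far1: "u \<in> D \<Longrightarrow> \<not> E u (\<phi> u)"
    and far2: "u \<in> D \<Longrightarrow> E u w \<Longrightarrow> \<not> E w (\<phi> u)"
begin

definition symset :: "'a set \<Rightarrow> bool" where
  "symset S \<longleftrightarrow> S \<subseteq> D \<and> (\<forall>u\<in>S. \<phi> u \<in> S)"

lemma inj_phi: "inj_on \<phi> D"
  by (metis inj_onI invol)

lemma closedD': "v \<in> D \<Longrightarrow> E u v \<Longrightarrow> u \<in> D"
  using closedD symE by blast

lemma credit_phi:
  assumes "S \<subseteq> D" shows "credit c (\<phi> ` S) = - credit c S"
proof -
  have 1: "{v\<in>\<phi> ` S. c v} = \<phi> ` {v\<in>S. \<not> c v}" using assms colsw by auto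
  have 2: "{v\<in>\<phi> ` S. \<not> c v} = \<phi> ` {v\<in>S. c v}" using assms colsw by auto
  have i: "inj_on \<phi> S" using inj_phi assms inj_on_subset by blast
  show ?thesis unfolding credit_def 1 2
    using card_image[OF inj_on_subset[OF i], of "{v\<in>S. \<not> c v}"] card_image[OF inj_on_subset[OF i], of "{v\<in>S. c v}"]
    by auto
qed

lemma symset_image: "symset S \<Longrightarrow> \<phi> ` S = S"
  unfolding symset_def using invol by (auto, metis image_eqI subsetD)

lemma credit_sym: "symset S \<Longrightarrow> credit c S = 0"
  using credit_phi[of S] symset_image[of S] unfolding symset_def by simp

end


context mir begin

lemma mirror_geom:
  assumes symS: "symset S" and HD: "H \<inter> D = {}" and isf: "iso E (S \<union> H) = {}"
    and xS: "x \<in> S" and finS: "finite S" and finH: "finite H"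
  defines "U \<equiv> S \<union> H"
  defines "A \<equiv> cnbhd E U x"
  defines "Y \<equiv> U - A"
  defines "I \<equiv> iso E Y"
  defines "Y' \<equiv> Y - I"
  defines "T \<equiv> S - (A \<union> I \<union> \<phi> ` A \<union> \<phi> ` I)"
  shows "\<phi> x \<in> Y'" "cnbhd E Y' (\<phi> x) = \<phi> ` A" "card (\<phi> ` A) = card A"
    "Y' - \<phi> ` A = (T \<union> H) \<union> \<phi> ` I" "(T \<union> H) \<inter> \<phi> ` I = {}"
    "\<forall>j\<in>\<phi> ` I. \<forall>v\<in>(T \<union> H) \<union> \<phi> ` I. \<not> E j v"
    "symset T" "card (T \<union> H) < card U" "credit c (\<phi> ` I) = - credit c I"
    "finite I" "finite T" "iso E Y' = {}"
proof -
  have SD: "S \<subseteq> D" and Sphi: "\<And>u. u \<in> S \<Longrightarrow> \<phi> u \<in> S" using symS unfolding symset_def by auto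
  have xD: "x \<in> D" using xS SD by auto
  have cross: "\<And>u v. u \<in> S \<Longrightarrow> v \<in> H \<Longrightarrow> \<not> E u v \<and> \<not> E v u"
    using SD HD closedD closedD' by blast
  have finU: "finite U" using finS finH U_def by auto
  have Ax: "\<And>a. a \<in> A \<Longrightarrow> a = x \<or> E x a" unfolding A_def cnbhd_def by auto
  have AS: "A \<subseteq> S" using Ax xS cross unfolding A_def cnbhd_def U_def by auto
  have finA: "finite A" using AS finS finite_subset by blast
  have xA: "x \<in> A" unfolding A_def cnbhd_def by auto
  have xU: "x \<in> U" using xS U_def by auto
  have isoU: "\<And>u. u \<in> U \<Longrightarrow> \<exists>v\<in>U. E u v" using isf unfolding iso_def U_def by auto
  obtain v0 where v0: "v0 \<in> U" "E x v0" using isoU[OF xU] by auto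
  have v0A: "v0 \<in> A" using v0 unfolding A_def cnbhd_def by auto
  have phiA: "\<And>a. a \<in> A \<Longrightarrow> \<phi> a \<notin> A"
  proof
    fix a assume a: "a \<in> A" and pa: "\<phi> a \<in> A"
    have aD: "a \<in> D" using a AS SD by auto
    show False
    proof (cases "a = x")
      case True
      then show False using Ax[OF pa] colsw[OF xD] far1[OF xD] by auto
    next
      case False
      then have Exa: "E x a" using Ax[OF a] by auto
      from Ax[OF pa] show False
      proof
        assume "\<phi> a = x"
        then have "a = \<phi> x" using invol[OF aD] by auto
        then show False using Exa far1[OF xD] by simp
      next
        assume "E x (\<phi> a)"
        then show False using far2[OF aD, of x] Exa symE by auto
      qed
    qed
  qed
  have YU: "Y \<subseteq> U" unfolding Y_def by auto
  have HY: "H \<subseteq> Y" using AS HD SD unfolding Y_def U_def by auto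
  have IY: "I \<subseteq> Y" unfolding I_def by (rule iso_sub)
  have IS: "I \<subseteq> S"
  proof
    fix i assume i: "i \<in> I"
    show "i \<in> S"
    proof (rule ccontr)
      assume "i \<notin> S"
      then have iH: "i \<in> H" using i IY YU U_def by auto
      obtain v where v: "v \<in> U" "E i v" using isoU iH U_def by auto
      have "v \<in> H" using v cross iH U_def by auto
      then have "v \<in> Y" using HY by auto
      then show False using i v unfolding I_def iso_def by auto
    qed
  qed
  have finI: "finite I" using IS finS finite_subset by blast
  show "finite I" by fact
  have phiAY: "\<And>a. a \<in> A \<Longrightarrow> \<phi> a \<in> Y" using phiA AS Sphi unfolding Y_def U_def by auto
  have pxY: "\<phi> x \<in> Y" using phiAY xA by auto
  have phiAY': "\<And>a. a \<in> A \<Longrightarrow> \<phi> a \<in> Y'"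
  proof -
    fix a assume a: "a \<in> A"
    have aD: "a \<in> D" using a AS SD by auto
    have "\<exists>v\<in>Y. E (\<phi> a) v"
    proof (cases "a = x")
      case True
      have "E (\<phi> x) (\<phi> v0)" using Ephi[OF xD, of v0] v0 AS v0A SD by auto
      then show ?thesis using True phiAY[OF v0A] by auto
    next
      case False
      then have "E x a" using Ax[OF a] by auto
      then have "E (\<phi> a) (\<phi> x)" using Ephi[OF xD aD] symE by auto
      then show ?thesis using pxY by auto
    qed
    then show "\<phi> a \<in> Y'" using phiAY[OF a] unfolding Y'_def I_def iso_def by auto
  qed
  show pxY': "\<phi> x \<in> Y'" using phiAY' xA by auto
  show "cnbhd E Y' (\<phi> x) = \<phi> ` A"
  proof
    show "cnbhd E Y' (\<phi> x) \<subseteq> \<phi> ` A"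
    proof
      fix y assume y: "y \<in> cnbhd E Y' (\<phi> x)"
      show "y \<in> \<phi> ` A"
      proof (cases "y = \<phi> x")
        case True then show ?thesis using xA by auto
      next
        case False
        then have yY: "y \<in> Y'" and E1: "E (\<phi> x) y" using y unfolding cnbhd_def by auto
        have yD: "y \<in> D" using closedD[OF phiD[OF xD] E1] .
        have "E (\<phi> x) (\<phi> (\<phi> y))" using E1 invol[OF yD] by simp
        then have "E x (\<phi> y)" using Ephi[OF xD phiD[OF yD]] by simp
        moreover have "\<phi> y \<in> U" using Sphi yY YU unfolding Y'_def U_def
          using HD yD by auto
        ultimately have "\<phi> y \<in> A" unfolding A_def cnbhd_def by auto
        then show ?thesis using invol[OF yD] by (metis image_eqI)
      qed
    qed
  next
    show "\<phi> ` A \<subseteq> cnbhd E Y' (\<phi> x)"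
    proof
      fix z assume "z \<in> \<phi> ` A"
      then obtain a where a: "a \<in> A" "z = \<phi> a" by auto
      have aD: "a \<in> D" using a AS SD by auto
      show "z \<in> cnbhd E Y' (\<phi> x)"
      proof (cases "a = x")
        case True then show ?thesis using a unfolding cnbhd_def by auto
      next
        case False
        then have "E x a" using Ax[OF a(1)] by auto
        then have "E (\<phi> x) (\<phi> a)" using Ephi[OF xD aD] by auto
        then show ?thesis using a phiAY' unfolding cnbhd_def by auto
      qed
    qed
  qed
  show "card (\<phi> ` A) = card A" using card_image inj_on_subset[OF inj_phi] AS SD by (metis subset_trans)
  have Inb: "\<And>i v. i \<in> I \<Longrightarrow> v \<in> U \<Longrightarrow> E i v \<Longrightarrow> v \<in> A"
    using IY unfolding I_def iso_def Y_def by auto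
  have phiI: "\<And>i. i \<in> I \<Longrightarrow> \<phi> i \<in> Y' \<and> \<phi> i \<notin> \<phi> ` A"
  proof -
    fix i assume i: "i \<in> I"
    have iD: "i \<in> D" using i IS SD by auto
    have iY: "i \<in> Y" using i IY by auto
    have iU: "i \<in> U" using iY YU by auto
    have noY: "\<And>v. v \<in> Y \<Longrightarrow> \<not> E i v" using i unfolding I_def iso_def by auto
    have piS: "\<phi> i \<in> S" using Sphi i IS by auto
    have piA: "\<phi> i \<notin> A"
    proof
      assume pa: "\<phi> i \<in> A"
      from Ax[OF pa] show False
      proof
        assume "\<phi> i = x"
        then have "i = \<phi> x" using invol[OF iD] by auto
        moreover have "E (\<phi> x) (\<phi> v0)" using Ephi[OF xD, of v0] v0 AS v0A SD by auto
        ultimately show False using noY phiAY[OF v0A] by auto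
      next
        assume "E x (\<phi> i)"
        then have "E (\<phi> x) i" using Ephi[OF xD phiD[OF iD]] invol[OF iD] by simp
        then show False using noY pxY symE by auto
      qed
    qed
    have piY: "\<phi> i \<in> Y" using piS piA unfolding Y_def U_def by auto
    obtain a where a: "a \<in> U" "E i a" using isoU[OF iU] by auto
    have aA: "a \<in> A" using Inb[OF i a(1) a(2)] .
    have "E (\<phi> i) (\<phi> a)" using Ephi[OF iD] a aA AS SD by auto
    then have "\<phi> i \<notin> I" using phiAY[OF aA] unfolding I_def iso_def by auto
    moreover have "\<phi> i \<notin> \<phi> ` A"
    proof
      assume "\<phi> i \<in> \<phi> ` A"
      then obtain a' where "a' \<in> A" "\<phi> i = \<phi> a'" by auto
      then have "i = a'" using inj_phi iD AS SD unfolding inj_on_def by auto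
      then show False using \<open>a' \<in> A\<close> iY unfolding Y_def by auto
    qed
    ultimately show "\<phi> i \<in> Y' \<and> \<phi> i \<notin> \<phi> ` A" using piY unfolding Y'_def by auto
  qed
  have Jnb: "\<And>i v. i \<in> I \<Longrightarrow> v \<in> U \<Longrightarrow> E (\<phi> i) v \<Longrightarrow> v \<in> \<phi> ` A"
  proof -
    fix i v assume i: "i \<in> I" and v: "v \<in> U" and e: "E (\<phi> i) v"
    have iD: "i \<in> D" using i IS SD by auto
    have vD: "v \<in> D" using closedD[OF phiD[OF iD] e] .
    have "E (\<phi> i) (\<phi> (\<phi> v))" using e invol[OF vD] by simp
    then have "E i (\<phi> v)" using Ephi[OF iD phiD[OF vD]] by simp
    moreover have "\<phi> v \<in> U" using v vD HD Sphi unfolding U_def by auto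
    ultimately have "\<phi> v \<in> A" using Inb[OF i] by auto
    then show "v \<in> \<phi> ` A" using invol[OF vD] by (metis image_eqI)
  qed
  have Y'U: "Y' \<subseteq> U" using YU Y'_def by auto
  show "Y' - \<phi> ` A = (T \<union> H) \<union> \<phi> ` I"
  proof
    show "Y' - \<phi> ` A \<subseteq> (T \<union> H) \<union> \<phi> ` I"
      unfolding T_def Y'_def Y_def U_def by auto
    show "(T \<union> H) \<union> \<phi> ` I \<subseteq> Y' - \<phi> ` A"
    proof -
      have "T \<union> H \<subseteq> Y' - \<phi> ` A"
      proof -
        have "T \<subseteq> Y' - \<phi> ` A" unfolding T_def Y'_def Y_def U_def by auto
        moreover have "H \<subseteq> Y' - \<phi> ` A"
        proof
          fix h assume h: "h \<in> H"
          have "h \<notin> I" using IS h HD SD by auto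
          moreover have "h \<notin> \<phi> ` A" using h HD phiD AS SD by auto
          ultimately show "h \<in> Y' - \<phi> ` A" using h HY unfolding Y'_def by auto
        qed
        ultimately show ?thesis by auto
      qed
      moreover have "\<phi> ` I \<subseteq> Y' - \<phi> ` A" using phiI by auto
      ultimately show ?thesis by auto
    qed
  qed
  show "(T \<union> H) \<inter> \<phi> ` I = {}"
    unfolding T_def using HD phiD IS SD by auto
  show "\<forall>j\<in>\<phi> ` I. \<forall>v\<in>(T \<union> H) \<union> \<phi> ` I. \<not> E j v"
  proof (intro ballI notI)
    fix j v assume j: "j \<in> \<phi> ` I" and v: "v \<in> (T \<union> H) \<union> \<phi> ` I" and e: "E j v"
    obtain i where i: "i \<in> I" "j = \<phi> i" using j by auto
    have vY: "v \<in> Y' - \<phi> ` A" using v \<open>Y' - \<phi> ` A = (T \<union> H) \<union> \<phi> ` I\<close> by auto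
    then have "v \<in> \<phi> ` A" using Jnb[OF i(1), of v] e i Y'U by auto
    then show False using vY by auto
  qed
  show "symset T"
    unfolding symset_def T_def
  proof (intro conjI ballI)
    show "S - (A \<union> I \<union> \<phi> ` A \<union> \<phi> ` I) \<subseteq> D" using SD by auto
  next
    fix u assume u: "u \<in> S - (A \<union> I \<union> \<phi> ` A \<union> \<phi> ` I)"
    have uD: "u \<in> D" using u SD by auto
    have "\<phi> u \<notin> A" using u invol[OF uD] by (metis DiffD2 UnCI image_eqI)
    moreover have "\<phi> u \<notin> I" using u invol[OF uD] by (metis DiffD2 UnCI image_eqI)
    moreover have "\<phi> u \<notin> \<phi> ` A"
      using u inj_phi uD AS SD unfolding inj_on_def by blast
    moreover have "\<phi> u \<notin> \<phi> ` I"
      using u inj_phi uD IS SD unfolding inj_on_def by blast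
    ultimately show "\<phi> u \<in> S - (A \<union> I \<union> \<phi> ` A \<union> \<phi> ` I)" using u Sphi by auto
  qed
  show "card (T \<union> H) < card U"
  proof (rule psubset_card_mono[OF finU])
    have xH: "x \<notin> H" using xD HD by auto
    have "x \<notin> T \<union> H" using xA xH unfolding T_def by auto
    moreover have "T \<union> H \<subseteq> U" unfolding T_def U_def by auto
    ultimately show "T \<union> H \<subset> U" using xU by auto
  qed
  show "credit c (\<phi> ` I) = - credit c I" using credit_phi IS SD by auto
  show "finite T" using finS T_def by auto
  show "iso E Y' = {}" unfolding Y'_def I_def by (rule iso_free)
qed

end


context mir begin

lemma mirror_isofree:
  assumes symS: "symset S" and finS: "finite S" and finH: "finite H" and HD: "H \<inter> D = {}"
    and isf: "iso E (S \<union> H) = {}"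
    and IH: "\<And>S0 H0 b. finite S0 \<Longrightarrow> symset S0 \<Longrightarrow> finite H0 \<Longrightarrow> H0 \<inter> D = {} \<Longrightarrow>
               card (S0 \<union> H0) < card (S \<union> H) \<Longrightarrow> sc b (S0 \<union> H0) = sc b H0"
  shows "sc True (S \<union> H) = sc True H \<and> sc False (S \<union> H) = sc False H"
proof -
  let ?U = "S \<union> H"
  have SD: "S \<subseteq> D" using symS unfolding symset_def by auto
  have cross: "\<And>u v. u \<in> S \<Longrightarrow> v \<in> H \<Longrightarrow> \<not> E u v \<and> \<not> E v u"
    using SD HD closedD closedD' by blast
  have finU: "finite ?U" using finS finH by auto
  have isfH: "iso E H = {}" using isf cross unfolding iso_def by blast
  have hmove: "\<And>x. x \<in> H \<Longrightarrow> fL ?U x = fL H x \<and> fR ?U x = fR H x"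
  proof -
    fix x assume xH: "x \<in> H"
    have N: "cnbhd E ?U x = cnbhd E H x" using cross xH unfolding cnbhd_def by auto
    have NH: "cnbhd E H x \<subseteq> H" using xH unfolding cnbhd_def by auto
    have R: "?U - cnbhd E H x = S \<union> (H - cnbhd E H x)" using NH SD HD by auto
    have lt: "card (S \<union> (H - cnbhd E H x)) < card ?U"
    proof (rule psubset_card_mono[OF finU])
      have "x \<notin> S \<union> (H - cnbhd E H x)" using xH SD HD unfolding cnbhd_def by auto
      then show "S \<union> (H - cnbhd E H x) \<subset> ?U" using xH by auto
    qed
    have "\<And>b. sc b (S \<union> (H - cnbhd E H x)) = sc b (H - cnbhd E H x)"
      by (rule IH[OF finS symS _ _ lt]) (use finH HD in auto)
    then show "fL ?U x = fL H x \<and> fR ?U x = fR H x" unfolding fL_def fR_def N R by simp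
  qed
  have smove: "\<And>x. x \<in> S \<Longrightarrow> (c x \<longrightarrow> fL ?U x \<le> sc True H) \<and> (\<not> c x \<longrightarrow> sc False H \<le> fR ?U x)"
  proof -
    fix x assume xS: "x \<in> S"
    note g = mirror_geom[OF symS HD isf xS finS finH]
    let ?A = "cnbhd E ?U x"
    let ?Y = "?U - ?A"
    let ?I = "iso E ?Y"
    let ?Y' = "?Y - ?I"
    let ?T = "S - (?A \<union> ?I \<union> \<phi> ` ?A \<union> \<phi> ` ?I)"
    have xD: "x \<in> D" using xS SD by auto
    have finY: "finite ?Y" using finU by auto
    have finY': "finite ?Y'" using finU by auto
    have sY: "\<And>b. sc b ?Y = credit c ?I + sc b ?Y'" using sc_iso[OF finY] by simp
    have sY2: "\<And>b. sc b (?Y' - \<phi> ` ?A) = - credit c ?I + sc b H"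
    proof -
      fix b
      have "sc b (?Y' - \<phi> ` ?A) = sc b ((?T \<union> H) \<union> \<phi> ` ?I)" using g(4) by simp
      also have "\<dots> = credit c (\<phi> ` ?I) + sc b (?T \<union> H)"
        by (rule iso_add) (use g(5) g(6) g(10) g(11) finH in auto)
      also have "sc b (?T \<union> H) = sc b H" by (rule IH) (use g(7) g(8) g(11) finH HD in auto)
      finally show "sc b (?Y' - \<phi> ` ?A) = - credit c ?I + sc b H" using g(9) by simp
    qed
    have p1: "c x \<longrightarrow> fL ?U x \<le> sc True H"
    proof
      assume cx: "c x"
      have "sc False ?Y' = mR ?Y'" using sc_isofree[OF finY' g(12)] by simp
      also have "\<dots> \<le> fR ?Y' (\<phi> x)" by (rule mR_le[OF finY' g(1)]) (use colsw[OF xD] cx in auto)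
      also have "\<dots> = - int (card ?A) - credit c ?I + sc True H"
        unfolding fR_def g(2) g(3) sY2 by simp
      finally have "sc False ?Y' \<le> - int (card ?A) - credit c ?I + sc True H" .
      then show "fL ?U x \<le> sc True H" unfolding fL_def sY by simp
    qed
    have p2: "\<not> c x \<longrightarrow> sc False H \<le> fR ?U x"
    proof
      assume cx: "\<not> c x"
      have "int (card ?A) - credit c ?I + sc False H = fL ?Y' (\<phi> x)"
        unfolding fL_def g(2) g(3) sY2 by simp
      also have "\<dots> \<le> mL ?Y'" by (rule mL_ge[OF finY' g(1)]) (use colsw[OF xD] cx in auto)
      also have "\<dots> = sc True ?Y'" using sc_isofree[OF finY' g(12)] by simp
      finally have "int (card ?A) - credit c ?I + sc False H \<le> sc True ?Y'" .
      then show "sc False H \<le> fR ?U x" unfolding fR_def sY by simp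
    qed
    show "(c x \<longrightarrow> fL ?U x \<le> sc True H) \<and> (\<not> c x \<longrightarrow> sc False H \<le> fR ?U x)" using p1 p2 by blast
  qed
  have scU: "sc True ?U = mL ?U" "sc False ?U = mR ?U" using sc_isofree[OF finU isf] by auto
  have scH: "sc True H = mL H" "sc False H = mR H" using sc_isofree[OF finH isfH] by auto
  have L1: "sc True ?U \<le> sc True H"
  proof (cases "\<exists>x\<in>?U. c x")
    case False then show ?thesis using scU scH mL_none[of ?U] mL_none[of H] by auto
  next
    case True
    then obtain x0 where "x0 \<in> ?U" "c x0" by auto
    then obtain x where x: "x \<in> ?U" "c x" "mL ?U = fL ?U x" using mL_ex[OF finU] by blast
    show ?thesis
    proof (cases "x \<in> H")
      case True
      then show ?thesis using hmove[OF True] mL_ge[OF finH True x(2)] x scU scH by simp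
    next
      case False
      then have "x \<in> S" using x by auto
      then show ?thesis using smove x scU by auto
    qed
  qed
  have R1: "sc False H \<le> sc False ?U"
  proof (cases "\<exists>x\<in>?U. \<not> c x")
    case False then show ?thesis using scU scH mR_none[of ?U] mR_none[of H] by auto
  next
    case True
    then obtain x0 where "x0 \<in> ?U" "\<not> c x0" by auto
    then obtain x where x: "x \<in> ?U" "\<not> c x" "mR ?U = fR ?U x" using mR_ex[OF finU] by blast
    show ?thesis
    proof (cases "x \<in> H")
      case True
      then show ?thesis using hmove[OF True] mR_le[OF finH True x(2)] x scU scH by simp
    next
      case False
      then have "x \<in> S" using x by auto
      then show ?thesis using smove x scU by auto
    qed
  qed
  have L2: "sc True H \<le> sc True ?U"
  proof (cases "\<exists>x\<in>H. c x")
    case True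
    then obtain x0 where "x0 \<in> H" "c x0" by auto
    then obtain x where x: "x \<in> H" "c x" "mL H = fL H x" using mL_ex[OF finH] by blast
    have "x \<in> ?U" using x by auto
    then show ?thesis using hmove[OF x(1)] mL_ge[OF finU _ x(2)] x scU scH by simp
  next
    case False
    then have "H = {}" using isofree_empty_noblack[OF isfH] by auto
    then show ?thesis using R1 NZ[OF finU] by simp
  qed
  have R2: "sc False ?U \<le> sc False H"
  proof (cases "\<exists>x\<in>H. \<not> c x")
    case True
    then obtain x0 where "x0 \<in> H" "\<not> c x0" by auto
    then obtain x where x: "x \<in> H" "\<not> c x" "mR H = fR H x" using mR_ex[OF finH] by blast
    have "x \<in> ?U" using x by auto
    then show ?thesis using hmove[OF x(1)] mR_le[OF finU _ x(2)] x scU scH by simp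
  next
    case False
    then have "H = {}" using isofree_empty_nowhite[OF isfH] by auto
    then show ?thesis using L1 NZ[OF finU] by simp
  qed
  show ?thesis using L1 L2 R1 R2 by simp
qed

lemma mirror_main:
  "finite S \<Longrightarrow> symset S \<Longrightarrow> finite H \<Longrightarrow> H \<inter> D = {} \<Longrightarrow> sc b (S \<union> H) = sc b H"
proof (induction "card (S \<union> H)" arbitrary: S H b rule: less_induct)
  case less
  note finS = less.prems(1) and symS = less.prems(2) and finH = less.prems(3) and HD = less.prems(4)
  let ?X = "S \<union> H"
  let ?I = "iso E ?X"
  have SD: "S \<subseteq> D" and Sphi: "\<And>u. u \<in> S \<Longrightarrow> \<phi> u \<in> S" using symS unfolding symset_def by auto
  have cross: "\<And>u v. u \<in> S \<Longrightarrow> v \<in> H \<Longrightarrow> \<not> E u v \<and> \<not> E v u"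
    using SD HD closedD closedD' by blast
  have finX: "finite ?X" using finS finH by auto
  have IX: "?I \<subseteq> ?X" by (rule iso_sub)
  have isoH: "iso E H = ?I \<inter> H" using cross unfolding iso_def by blast
  have symIS: "symset (?I \<inter> S)"
    unfolding symset_def
  proof (intro conjI ballI)
    show "?I \<inter> S \<subseteq> D" using SD by auto
  next
    fix u assume u: "u \<in> ?I \<inter> S"
    have uD: "u \<in> D" using u SD by auto
    have pu: "\<phi> u \<in> S" using Sphi u by auto
    have "\<not> (\<exists>w\<in>?X. E (\<phi> u) w)"
    proof
      assume "\<exists>w\<in>?X. E (\<phi> u) w"
      then obtain w where w: "w \<in> ?X" "E (\<phi> u) w" by auto
      have wD: "w \<in> D" using closedD[OF phiD[OF uD] w(2)] .
      have wS: "w \<in> S" using w wD HD by auto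
      have "E (\<phi> u) (\<phi> (\<phi> w))" using w invol[OF wD] by simp
      then have "E u (\<phi> w)" using Ephi[OF uD phiD[OF wD]] by simp
      then show False using u Sphi[OF wS] unfolding iso_def by auto
    qed
    then show "\<phi> u \<in> ?I \<inter> S" using pu unfolding iso_def by auto
  qed
  let ?S' = "S - ?I"
  let ?H' = "H - ?I"
  have symS': "symset ?S'"
    unfolding symset_def
  proof (intro conjI ballI)
    show "?S' \<subseteq> D" using SD by auto
  next
    fix u assume u: "u \<in> ?S'"
    have uD: "u \<in> D" using u SD by auto
    have "\<phi> u \<notin> ?I"
    proof
      assume "\<phi> u \<in> ?I"
      then have "\<phi> u \<in> ?I \<inter> S" using Sphi u by auto
      then have "\<phi> (\<phi> u) \<in> ?I \<inter> S" using symIS unfolding symset_def by blast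
      then show False using u invol[OF uD] by auto
    qed
    then show "\<phi> u \<in> ?S'" using Sphi u by auto
  qed
  have eU: "?X - ?I = ?S' \<union> ?H'" by auto
  have isf: "iso E (?S' \<union> ?H') = {}" using iso_free[of ?X] eU by simp
  have crI: "credit c ?I = credit c (iso E H)"
  proof -
    have "?I = (?I \<inter> S) \<union> (?I \<inter> H)" using IX by auto
    then have "credit c ?I = credit c (?I \<inter> S) + credit c (?I \<inter> H)"
      using finS finH SD HD by (metis credit_union disjoint_iff finite_Int IntD2 IntD1 subsetD)
    then show ?thesis using credit_sym[OF symIS] isoH by simp
  qed
  have sX: "sc b ?X = credit c (iso E H) + sc b (?S' \<union> ?H')" using sc_iso[OF finX] eU crI by simp
  have eH: "H - iso E H = ?H'" using isoH by auto
  have sH: "sc b H = credit c (iso E H) + sc b ?H'" using sc_iso[OF finH, of b] eH by simp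
  have le: "card (?S' \<union> ?H') \<le> card ?X" using finX by (intro card_mono) auto
  have "sc True (?S' \<union> ?H') = sc True ?H' \<and> sc False (?S' \<union> ?H') = sc False ?H'"
  proof (rule mirror_isofree[OF symS' _ _ _ isf])
    show "finite ?S'" "finite ?H'" using finS finH by auto
    show "?H' \<inter> D = {}" using HD by auto
    fix S0 H0 b
    assume "finite S0" "symset S0" "finite H0" "H0 \<inter> D = {}" "card (S0 \<union> H0) < card (?S' \<union> ?H')"
    then show "sc b (S0 \<union> H0) = sc b H0" using less.hyps le by auto
  qed
  then have "sc b (?S' \<union> ?H') = sc b ?H'" by (cases b) auto
  then show ?case using sX sH by simp
qed

end


lemma dist3:
  assumes "dist_ge3 V E u v" "v \<in> V"
  shows "\<not> E u v" "\<And>w. w \<in> V \<Longrightarrow> E u w \<Longrightarrow> \<not> E w v"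
  using assms by (auto simp: dist_ge3_def numeral_2_eq_2)

theorem mainTheorem10:
  fixes V :: "'a set" and c :: "'a \<Rightarrow> bool" and E :: "'a \<Rightarrow> 'a \<Rightarrow> bool"
    and \<phi> :: "'a \<Rightarrow> 'a"
  assumes "bipartite_graph V c E"
    and "BW_automorphism V c E \<phi>"
  shows "(\<forall>(W :: 'b set) d F. bipartite_graph W d F \<longrightarrow>
            Ls (sum_V V W) (sum_col c d) (sum_E E F) = Ls W d F \<and>
            Rs (sum_V V W) (sum_col c d) (sum_E E F) = Rs W d F)
         \<and> Ls V c E = 0 \<and> Rs V c E = 0"
proof -
  have finV: "finite V" and symV: "\<And>u v. u \<in> V \<Longrightarrow> v \<in> V \<Longrightarrow> E u v = E v u"
    and bipV: "\<And>u v. u \<in> V \<Longrightarrow> v \<in> V \<Longrightarrow> E u v \<Longrightarrow> c u \<noteq> c v"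
    using assms(1) unfolding bipartite_graph_def by blast+
  have symV': "\<And>u v. u \<in> V \<Longrightarrow> v \<in> V \<Longrightarrow> E u v \<Longrightarrow> E v u" using symV by blast
  have phiV: "\<And>u. u \<in> V \<Longrightarrow> \<phi> u \<in> V" using assms(2) unfolding BW_automorphism_def bij_betw_def by auto
  have EphiV: "\<And>u v. u \<in> V \<Longrightarrow> v \<in> V \<Longrightarrow> E (\<phi> u) (\<phi> v) = E u v"
    using assms(2) unfolding BW_automorphism_def by auto
  have invV: "\<And>u. u \<in> V \<Longrightarrow> \<phi> (\<phi> u) = u" and colV: "\<And>u. u \<in> V \<Longrightarrow> c (\<phi> u) \<noteq> c u"
    and dV: "\<And>u. u \<in> V \<Longrightarrow> dist_ge3 V E u (\<phi> u)"
    using assms(2) unfolding BW_automorphism_def by auto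
  have far1V: "\<And>u. u \<in> V \<Longrightarrow> \<not> E u (\<phi> u)" using dist3(1)[OF dV phiV] by blast
  have far2V: "\<And>u w. u \<in> V \<Longrightarrow> w \<in> V \<Longrightarrow> E u w \<Longrightarrow> \<not> E w (\<phi> u)"
    using dist3(2)[OF dV phiV] by blast
  define E1 where "E1 u v \<longleftrightarrow> u \<in> V \<and> v \<in> V \<and> E u v" for u v
  interpret m1: mir c E1 V \<phi>
  proof unfold_locales
    show "\<And>u v. E1 u v = E1 v u" unfolding E1_def using symV' by blast
    show "\<And>u v. E1 u v \<Longrightarrow> c u \<noteq> c v" unfolding E1_def using bipV by auto
    show "\<And>u. u \<in> V \<Longrightarrow> \<phi> u \<in> V" by (rule phiV)
    show "\<And>u. u \<in> V \<Longrightarrow> \<phi> (\<phi> u) = u" by (rule invV)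
    show "\<And>u. u \<in> V \<Longrightarrow> c (\<phi> u) \<noteq> c u" by (rule colV)
    show "\<And>u v. u \<in> V \<Longrightarrow> v \<in> V \<Longrightarrow> E1 (\<phi> u) (\<phi> v) = E1 u v" unfolding E1_def using EphiV phiV by auto
    show "\<And>u v. u \<in> V \<Longrightarrow> E1 u v \<Longrightarrow> v \<in> V" unfolding E1_def by auto
    show "\<And>u. u \<in> V \<Longrightarrow> \<not> E1 u (\<phi> u)" unfolding E1_def using far1V by auto
    show "\<And>u w. u \<in> V \<Longrightarrow> E1 u w \<Longrightarrow> \<not> E1 w (\<phi> u)" unfolding E1_def using far2V by auto
  qed
  have tr1: "\<And>n b. infl n b c E V = infl n b c E1 V"
    using infl_transfer[of id V c c E1 E] unfolding E1_def by auto
  have symVV: "m1.symset V" unfolding m1.symset_def using phiV by auto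
  have z: "\<And>b. m1.sc b V = 0" using m1.mirror_main[OF finV symVV, of "{}"] by simp
  have part2: "Ls V c E = 0 \<and> Rs V c E = 0"
    unfolding Ls_def Rs_def tr1 using z unfolding m1.sc_def by auto
  have part1: "\<forall>(W :: 'b set) d F. bipartite_graph W d F \<longrightarrow>
            Ls (sum_V V W) (sum_col c d) (sum_E E F) = Ls W d F \<and>
            Rs (sum_V V W) (sum_col c d) (sum_E E F) = Rs W d F"
  proof (intro allI impI)
    fix W :: "'b set" and d F
    assume bW: "bipartite_graph W d F"
    have symW': "\<And>u v. u \<in> W \<Longrightarrow> v \<in> W \<Longrightarrow> F u v \<Longrightarrow> F v u"
      using bW unfolding bipartite_graph_def by blast
    have finW: "finite W" and symW: "\<And>u v. u \<in> W \<Longrightarrow> v \<in> W \<Longrightarrow> F u v = F v u"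
      and bipW: "\<And>u v. u \<in> W \<Longrightarrow> v \<in> W \<Longrightarrow> F u v \<Longrightarrow> d u \<noteq> d v"
      using bW unfolding bipartite_graph_def by blast+
    define A where "A = sum_V V W"
    define col where "col = sum_col c d"
    define E2 where "E2 u v \<longleftrightarrow> u \<in> A \<and> v \<in> A \<and> sum_E E F u v" for u v
    define \<psi> :: "'a + 'b \<Rightarrow> 'a + 'b" where "\<psi> u = (case u of Inl a \<Rightarrow> Inl (\<phi> a) | Inr b \<Rightarrow> Inr b)" for u
    have Ainl: "\<And>x. Inl x \<in> A \<longleftrightarrow> x \<in> V" and Ainr: "\<And>x. Inr x \<in> A \<longleftrightarrow> x \<in> W"
      unfolding A_def sum_V_def by auto
    have E2ll: "\<And>x y. E2 (Inl x) (Inl y) \<longleftrightarrow> x \<in> V \<and> y \<in> V \<and> E x y"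
      unfolding E2_def Ainl by simp
    have E2rr: "\<And>x y. E2 (Inr x) (Inr y) \<longleftrightarrow> x \<in> W \<and> y \<in> W \<and> F x y"
      unfolding E2_def Ainr by simp
    have E2lr: "\<And>x y. \<not> E2 (Inl x) (Inr y)" "\<And>x y. \<not> E2 (Inr y) (Inl x)"
      unfolding E2_def by auto
    have colI: "\<And>x. col (Inl x) = c x" "\<And>x. col (Inr x) = d x" unfolding col_def sum_col_def by auto
    have psiI: "\<And>x. \<psi> (Inl x) = Inl (\<phi> x)" unfolding \<psi>_def by simp
    interpret m2: mir col E2 "Inl ` V" \<psi>
    proof unfold_locales
      show "\<And>u v. E2 u v = E2 v u"
      proof -
        fix u v show "E2 u v = E2 v u"
          by (cases u; cases v) (auto simp: E2ll E2rr E2lr dest: symV' symW')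
      qed
      show "\<And>u v. E2 u v \<Longrightarrow> col u \<noteq> col v"
      proof -
        fix u v assume "E2 u v" then show "col u \<noteq> col v"
          by (cases u; cases v) (auto simp: E2ll E2rr E2lr colI dest: bipV bipW)
      qed
      show "\<And>u. u \<in> Inl ` V \<Longrightarrow> \<psi> u \<in> Inl ` V" using psiI phiV by auto
      show "\<And>u. u \<in> Inl ` V \<Longrightarrow> \<psi> (\<psi> u) = u" using psiI invV by auto
      show "\<And>u. u \<in> Inl ` V \<Longrightarrow> col (\<psi> u) \<noteq> col u" using psiI colV colI by auto
      show "\<And>u v. u \<in> Inl ` V \<Longrightarrow> v \<in> Inl ` V \<Longrightarrow> E2 (\<psi> u) (\<psi> v) = E2 u v"
        using psiI E2ll EphiV phiV by auto
      show "\<And>u v. u \<in> Inl ` V \<Longrightarrow> E2 u v \<Longrightarrow> v \<in> Inl ` V"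
      proof -
        fix u v assume "u \<in> Inl ` V" "E2 u v" then show "v \<in> Inl ` V"
          by (cases v) (auto simp: E2ll E2lr)
      qed
      show "\<And>u. u \<in> Inl ` V \<Longrightarrow> \<not> E2 u (\<psi> u)" using psiI E2ll far1V by auto
      show "\<And>u w. u \<in> Inl ` V \<Longrightarrow> E2 u w \<Longrightarrow> \<not> E2 w (\<psi> u)"
      proof -
        fix u w assume "u \<in> Inl ` V" "E2 u w" then show "\<not> E2 w (\<psi> u)"
          by (cases w) (auto simp: E2ll E2lr psiI dest: far2V)
      qed
    qed
    have finA: "finite A" unfolding A_def sum_V_def using finV finW by auto
    have tr2: "\<And>n b. infl n b col (sum_E E F) A = infl n b col E2 A"
      using infl_transfer[of id A col col E2 "sum_E E F"] unfolding E2_def by auto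
    have tr3: "\<And>n b. infl n b col E2 (Inr ` W) = infl n b d F W"
      by (rule infl_transfer) (auto simp: colI E2rr)
    have AU: "A = Inl ` V \<union> Inr ` W" unfolding A_def sum_V_def ..
    have symL: "m2.symset (Inl ` V)" unfolding m2.symset_def using psiI phiV by auto
    have mm: "\<And>b. m2.sc b A = m2.sc b (Inr ` W)"
      unfolding AU by (rule m2.mirror_main[OF _ symL]) (use finV finW in auto)
    have cW: "card (Inr ` W) = card W" by (simp add: card_image)
    have "\<And>b. infl (card A) b col (sum_E E F) A = infl (card W) b d F W"
      using mm unfolding m2.sc_def tr2 cW tr3 by simp
    then show "Ls (sum_V V W) (sum_col c d) (sum_E E F) = Ls W d F \<and>
            Rs (sum_V V W) (sum_col c d) (sum_E E F) = Rs W d F"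
      unfolding Ls_def Rs_def A_def[symmetric] col_def[symmetric] by simp
  qed
  show ?thesis using part1 part2 by blast
qed

end
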